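(* In the setting below, suppose $p,q\geq5$. Then for all distinct $i,j,k\in\mathbb Z/N\mathbb Z$ we have $P_{ij}\cap Q_{jk}=\emptyset$.
   Context: Setting: $p,q$ distinct primes, $N=p+q$; $M=(m_{ik})_{i,k\in\mathbb Z/N\mathbb Z}$ has entries in $\mathbb Z/pq\mathbb Z$ and $(e^{2\pi i\,m_{ik}/pq})$ is a complex Hadamard matrix (unimodular entries, orthogonal rows). $L_i(k)=m_{ik}$, $L_{ij}=L_j-L_i$. For $d\mid pq$, $d(\mathbb Z/pq\mathbb Z)$ is the subgroup of multiples of $d$. For distinct $i,j$ there is a partition $\mathbb Z/N\mathbb Z=P_{ij}\sqcup Q_{ij}\sqcup R_{ij}$ and $r\in\mathbb Z/pq\mathbb Z$ with: $\#R_{ij}=2$ and $L_{ij}\equiv r$ on $R_{ij}$; $\#P_{ij}=p-1$ and $L_{ij}(P_{ij})=(r+q(\mathbb Z/pq\mathbb Z))\setminus\{r\}$; $\#Q_{ij}=q-1$ and $L_{ij}(Q_{ij})=(r+p(\mathbb Z/pq\mathbb Z))\setminus\{r\}$. This partition is unique ($R_{ij}$ is the pair of indices where $L_{ij}$ takes its unique repeated value). Put $P^+_{ij}=P_{ij}\cup R_{ij}$, $Q^+_{ij}=Q_{ij}\cup R_{ij}$. *)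

theory Defs
  imports Complex_Main "HOL-Computational_Algebra.Primes"
begin

text \<open>Indices of Z/NZ are represented by naturals in {0..<N}; entries of Z/pqZ by
integers, read modulo n = p*q.\<close>

definition Ldiff :: "nat \<Rightarrow> (nat \<Rightarrow> nat \<Rightarrow> int) \<Rightarrow> nat \<Rightarrow> nat \<Rightarrow> nat \<Rightarrow> int" where
  "Ldiff n m i j k = (m j k - m i k) mod int n"

text \<open>(exp(2 pi i m_ik / n))_{i,k<N} is a complex Hadamard matrix: unimodular entries
(automatic) and pairwise orthogonal rows.\<close>
definition exp_hadamard :: "nat \<Rightarrow> nat \<Rightarrow> (nat \<Rightarrow> nat \<Rightarrow> int) \<Rightarrow> bool" where
  "exp_hadamard N n m \<longleftrightarrow>
     (\<forall>i<N. \<forall>i'<N. i \<noteq> i' \<longrightarrow>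
        (\<Sum>k<N. exp (2 * pi * \<i> * of_int (m i k) / of_nat n)
               * cnj (exp (2 * pi * \<i> * of_int (m i' k) / of_nat n))) = 0)"

definition coset_mod :: "nat \<Rightarrow> nat \<Rightarrow> int \<Rightarrow> int set" where
  "coset_mod n d r = {x. 0 \<le> x \<and> x < int n \<and> x mod int d = r mod int d}"

definition is_PQR_partition ::
  "nat \<Rightarrow> nat \<Rightarrow> (nat \<Rightarrow> nat \<Rightarrow> int) \<Rightarrow> nat \<Rightarrow> nat
   \<Rightarrow> nat set \<Rightarrow> nat set \<Rightarrow> nat set \<Rightarrow> int \<Rightarrow> bool" where
  "is_PQR_partition p q m i j P Q R r \<longleftrightarrow>
     P \<union> Q \<union> R = {0..<p+q} \<and> P \<inter> Q = {} \<and> P \<inter> R = {} \<and> Q \<inter> R = {} \<and>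
     0 \<le> r \<and> r < int (p*q) \<and>
     card R = 2 \<and> (\<forall>k\<in>R. Ldiff (p*q) m i j k = r) \<and>
     card P = p - 1 \<and> Ldiff (p*q) m i j ` P = coset_mod (p*q) q r - {r} \<and>
     card Q = q - 1 \<and> Ldiff (p*q) m i j ` Q = coset_mod (p*q) p r - {r}"

end

theory Submission
  imports Defs
begin

lemma double_sum_lt: "2 * (\<Sum>i<n. i) = n * (n - 1::nat)"
proof (induction n)
  case (Suc n) thus ?case by (cases n) (auto simp: algebra_simps)
qed simp

lemma sum_lemma:
  fixes p q N :: nat and L :: "nat \<Rightarrow> int" and P Q R :: "nat set" and r :: int
  assumes pp: "prime p" and podd: "odd p" and q0: "q > 0"
   and U: "P \<union> Q \<union> R = {0..<N}" and d1: "P \<inter> Q = {}" and d2: "P \<inter> R = {}"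
   and d3: "Q \<inter> R = {}"
   and cR: "card R = 2" and LR: "\<forall>k\<in>R. L k = r"
   and cP: "card P = p - 1" and LP: "L ` P = coset_mod (p*q) q r - {r}"
   and cQ: "card Q = q - 1" and LQ: "L ` Q \<subseteq> coset_mod (p*q) p r"
   and r0: "0 \<le> r" and r1: "r < int (p*q)"
  shows "int p dvd ((\<Sum>x\<in>{0..<N}. L x) - int q * r)"
proof -
  have fP: "finite P" and fQ: "finite Q" and fR: "finite R"
    using U by (metis finite_Un finite_atLeastLessThan)+
  define S where "S = coset_mod (p*q) q r"
  define g where "g = (\<lambda>s::nat. r mod int q + int q * int s)"
  have hS: "S = g ` {0..<p}"
  proof
    show "S \<subseteq> g ` {0..<p}"
    proof
      fix y assume "y \<in> S"
      hence y: "0 \<le> y" "y < int p * int q" "y mod int q = r mod int q"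
        unfolding S_def coset_mod_def by auto
      have e: "y = int q * (y div int q) + y mod int q" by simp
      have a: "0 \<le> y div int q" using y q0 by (simp add: pos_imp_zdiv_nonneg_iff)
      have m0: "0 \<le> y mod int q" using q0 by simp
      have b: "y div int q < int p"
      proof (rule ccontr)
        assume "\<not> y div int q < int p"
        hence "int q * int p \<le> int q * (y div int q)" by (simp add: mult_left_mono)
        thus False using e m0 y(2) by (simp add: algebra_simps)
      qed
      have "y = g (nat (y div int q))" unfolding g_def using a y(3) e by simp
      moreover have "nat (y div int q) \<in> {0..<p}" using a b by auto
      ultimately show "y \<in> g ` {0..<p}" by blast
    qed
  next
    show "g ` {0..<p} \<subseteq> S"
    proof
      fix y assume "y \<in> g ` {0..<p}"
      then obtain s where s: "s < p" "y = g s" by auto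
      have m1: "0 \<le> r mod int q" "r mod int q < int q" using q0 by auto
      have "int q * int s \<le> int q * (int p - 1)" using s by (simp add: mult_left_mono)
      hence "y < int p * int q" using s m1 by (simp add: g_def algebra_simps)
      moreover have "0 \<le> y" using s m1 by (simp add: g_def)
      moreover have "y mod int q = r mod int q" using s by (simp add: g_def)
      ultimately show "y \<in> S" unfolding S_def coset_mod_def by simp
    qed
  qed
  have ginj: "inj_on g {0..<p}" unfolding g_def inj_on_def using q0 by simp
  have cS: "card S = p" using hS ginj by (simp add: card_image)
  have rS: "r \<in> S" unfolding S_def coset_mod_def using r0 r1 by simp
  have fS: "finite S" using hS by simp
  have sumS: "(\<Sum>y\<in>S. y) = int p * (r mod int q) + int q * int (\<Sum>s<p. s)"
    using hS ginj by (simp add: sum.reindex g_def sum.distrib sum_distrib_left lessThan_atLeast0)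
  obtain t where t: "p - 1 = 2 * t" using podd pp
    by (metis odd_two_times_div_two_nat prime_gt_0_nat)
  have "2 * (\<Sum>s<p. s) = p * (2 * t)" using double_sum_lt[of p] t by simp
  hence "(\<Sum>s<p. s) = p * t" by simp
  hence dS: "int p dvd (\<Sum>y\<in>S. y)" using sumS by simp
  have cimg: "card (L ` P) = card P" using LP cS rS fS cP by (simp add: S_def[symmetric])
  have injP: "inj_on L P" using eq_card_imp_inj_on[OF fP cimg] .
  have sP: "(\<Sum>x\<in>P. L x) = (\<Sum>y\<in>S. y) - r"
  proof -
    have "(\<Sum>x\<in>P. L x) = (\<Sum>y\<in>L ` P. y)" using injP by (simp add: sum.reindex)
    also have "\<dots> = (\<Sum>y\<in>S. y) - r" using LP S_def sum_diff1[OF fS, of "\<lambda>y. y" r] rS by simp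
    finally show ?thesis .
  qed
  have dQ: "int p dvd (\<Sum>x\<in>Q. L x - r)"
  proof (rule dvd_sum)
    fix x assume "x \<in> Q"
    hence "L x \<in> coset_mod (p*q) p r" using LQ by auto
    hence "L x mod int p = r mod int p" unfolding coset_mod_def by simp
    thus "int p dvd L x - r" by (simp add: mod_eq_dvd_iff)
  qed
  have sQ: "(\<Sum>x\<in>Q. L x - r) = (\<Sum>x\<in>Q. L x) - (int q - 1) * r"
    using cQ q0 by (simp add: sum_subtractf of_nat_diff)
  have sR: "(\<Sum>x\<in>R. L x) = 2 * r" using LR cR by simp
  have "(\<Sum>x\<in>{0..<N}. L x) = (\<Sum>x\<in>P. L x) + (\<Sum>x\<in>Q. L x) + (\<Sum>x\<in>R. L x)"
    using U d1 d2 d3 fP fQ fR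
    by (metis (no_types, lifting) Int_Un_distrib2 sup_bot.right_neutral finite_UnI sum.union_disjoint)
  hence "(\<Sum>x\<in>{0..<N}. L x) - int q * r = (\<Sum>y\<in>S. y) + (\<Sum>x\<in>Q. L x - r)"
    using sP sQ sR by (simp add: algebra_simps)
  thus ?thesis using dS dQ by simp
qed

lemma pair_dvd:
  assumes pp: "prime p" and pq: "prime q" and p5: "p \<ge> 5" and q5: "q \<ge> 5"
    and H: "is_PQR_partition p q m a b P Q R r"
  shows "int p dvd ((\<Sum>x\<in>{0..<p+q}. Ldiff (p*q) m a b x) - int q * r)"
    and "int q dvd ((\<Sum>x\<in>{0..<p+q}. Ldiff (p*q) m a b x) - int p * r)"
proof -
  have op: "odd p" using pp p5 by (intro prime_odd_nat) auto
  have oq: "odd q" using pq q5 by (intro prime_odd_nat) auto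
  note H' = H[unfolded is_PQR_partition_def]
  have U: "P \<union> Q \<union> R = {0..<p+q}" using H' by (elim conjE) assumption
  have d1: "P \<inter> Q = {}" using H' by (elim conjE) assumption
  have d2: "P \<inter> R = {}" using H' by (elim conjE) assumption
  have d3: "Q \<inter> R = {}" using H' by (elim conjE) assumption
  have r0: "0 \<le> r" using H' by (elim conjE) assumption
  have r1: "r < int (p*q)" using H' by (elim conjE) assumption
  have cR: "card R = 2" using H' by (elim conjE) assumption
  have LR: "\<forall>k\<in>R. Ldiff (p*q) m a b k = r" using H' by (elim conjE) assumption
  have cP: "card P = p - 1" using H' by (elim conjE) assumption
  have LP: "Ldiff (p*q) m a b ` P = coset_mod (p*q) q r - {r}" using H' by (elim conjE) assumption
  have cQ: "card Q = q - 1" using H' by (elim conjE) assumption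
  have LQ: "Ldiff (p*q) m a b ` Q = coset_mod (p*q) p r - {r}" using H' by (elim conjE) assumption
  have q0: "q > 0" "p > 0" using p5 q5 by auto
  show "int p dvd ((\<Sum>x\<in>{0..<p+q}. Ldiff (p*q) m a b x) - int q * r)"
    by (rule sum_lemma[OF pp op q0(1) U d1 d2 d3 cR LR cP LP cQ _ r0 r1]) (use LQ in blast)
  have e1: "coset_mod (p*q) p r = coset_mod (q*p) p r" "coset_mod (p*q) q r = coset_mod (q*p) q r"
    by (simp_all add: mult.commute)
  show "int q dvd ((\<Sum>x\<in>{0..<p+q}. Ldiff (p*q) m a b x) - int p * r)"
  proof (rule sum_lemma[OF pq oq q0(2), where P=Q and Q=P and R=R])
    show "Q \<union> P \<union> R = {0..<p+q}" using U by blast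
    show "Q \<inter> P = {}" using d1 by blast
    show "Ldiff (p*q) m a b ` Q = coset_mod (q*p) p r - {r}" using LQ e1 by simp
    show "Ldiff (p*q) m a b ` P \<subseteq> coset_mod (q*p) q r" using LP e1 by auto
    show "r < int (q*p)" using r1 by (simp add: mult.commute)
  qed (use d2 d3 cR LR cP cQ r0 in auto)
qed

lemma not_both:
  fixes u v :: int
  assumes pp: "prime p" and pq: "prime q" and ne: "p \<noteq> q"
    and u: "0 \<le> u" "u < int (p*q)" and v: "0 \<le> v" "v < int (p*q)" and uv: "u \<noteq> v"
    and dq: "int q dvd u - v"
  shows "\<not> int p dvd u - v"
proof
  assume dp: "int p dvd u - v"
  have "coprime p q" using pp pq ne by (simp add: primes_coprime)
  hence "coprime (int p) (int q)" by simp
  hence "int p * int q dvd u - v" using dp dq by (simp add: divides_mult)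
  hence "u mod int (p*q) = v mod int (p*q)" by (simp add: mod_eq_dvd_iff)
  hence "u = v" using u v by simp
  thus False using uv by simp
qed

theorem lemma6p6:
  fixes p q :: nat and m :: "nat \<Rightarrow> nat \<Rightarrow> int"
    and P Q R :: "nat \<Rightarrow> nat \<Rightarrow> nat set" and r :: "nat \<Rightarrow> nat \<Rightarrow> int"
    and i j k :: nat
  assumes "prime p" and "prime q" and "p \<noteq> q"
    and "p \<ge> 5" and "q \<ge> 5"
    and "exp_hadamard (p + q) (p * q) m"
    and "\<forall>a<p+q. \<forall>b<p+q. a \<noteq> b \<longrightarrow>
           is_PQR_partition p q m a b (P a b) (Q a b) (R a b) (r a b)"
    and "i < p + q" and "j < p + q" and "k < p + q"
    and "i \<noteq> j" and "j \<noteq> k" and "i \<noteq> k"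
  shows "P i j \<inter> Q j k = {}"
proof (rule ccontr)
  note pp = assms(1) and pq = assms(2) and ne = assms(3)
  define n where "n = p * q"
  define Lij where "Lij = Ldiff n m i j"
  define Ljk where "Ljk = Ldiff n m j k"
  define Lik where "Lik = Ldiff n m i k"
  have Hij: "is_PQR_partition p q m i j (P i j) (Q i j) (R i j) (r i j)" using assms(7) assms(8) assms(9) assms(11) by blast
  have Hjk: "is_PQR_partition p q m j k (P j k) (Q j k) (R j k) (r j k)" using assms(7) assms(9) assms(10) assms(12) by blast
  have Hik: "is_PQR_partition p q m i k (P i k) (Q i k) (R i k) (r i k)" using assms(7) assms(8) assms(10) assms(13) by blast
  note dij = pair_dvd[OF pp pq assms(4,5) Hij, folded n_def, folded Lij_def]
  note djk = pair_dvd[OF pp pq assms(4,5) Hjk, folded n_def, folded Ljk_def]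
  note dik = pair_dvd[OF pp pq assms(4,5) Hik, folded n_def, folded Lik_def]
  have pw: "int n dvd Lik x - Lij x - Ljk x" for x
  proof -
    have e: "Lik x - Lij x - Ljk x = ((m k x - m i x) mod int n - (m k x - m i x))
        - ((m j x - m i x) mod int n - (m j x - m i x)) - ((m k x - m j x) mod int n - (m k x - m j x))"
      unfolding Lik_def Lij_def Ljk_def Ldiff_def by simp
    have X1: "int n dvd ((m k x - m i x) mod int n - (m k x - m i x))"
      by (subst dvd_diff_commute) simp
    have X2: "int n dvd ((m j x - m i x) mod int n - (m j x - m i x))"
      by (subst dvd_diff_commute) simp
    have X3: "int n dvd ((m k x - m j x) mod int n - (m k x - m j x))"
      by (subst dvd_diff_commute) simp
    show ?thesis unfolding e by (rule dvd_diff[OF dvd_diff[OF X1 X2] X3])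
  qed
  define A where "A = (\<Sum>x\<in>{0..<p+q}. Lij x)"
  define B where "B = (\<Sum>x\<in>{0..<p+q}. Ljk x)"
  define C where "C = (\<Sum>x\<in>{0..<p+q}. Lik x)"
  have dS: "int n dvd C - A - B"
  proof -
    have "C - A - B = (\<Sum>x\<in>{0..<p+q}. Lik x - Lij x - Ljk x)"
      unfolding A_def B_def C_def by (simp add: sum_subtractf)
    thus ?thesis using pw by (simp add: dvd_sum)
  qed
  have pn: "int p dvd int n" and qn: "int q dvd int n" unfolding n_def by simp_all
  define s where "s = r i k - r i j - r j k"
  have cop: "coprime (int p) (int q)" using pp pq ne by (simp add: primes_coprime)
  have "int p dvd int q * s"
  proof -
    have e: "int q * s = - ((C - int q * r i k) - (A - int q * r i j) - (B - int q * r j k) - (C - A - B))"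
      unfolding s_def by (simp add: algebra_simps)
    have X: "int p dvd (C - A - B)" using dS pn dvd_trans by blast
    show ?thesis unfolding e
      by (intro dvd_minus_iff[THEN iffD2], rule dvd_diff[OF dvd_diff[OF dvd_diff]])
        (use dij(1) djk(1) dik(1) X in \<open>simp_all add: A_def B_def C_def\<close>)
  qed
  hence ps: "int p dvd s" using coprime_dvd_mult_right_iff[OF cop] by simp
  have "int q dvd int p * s"
  proof -
    have e: "int p * s = - ((C - int p * r i k) - (A - int p * r i j) - (B - int p * r j k) - (C - A - B))"
      unfolding s_def by (simp add: algebra_simps)
    have X: "int q dvd (C - A - B)" using dS qn dvd_trans by blast
    show ?thesis unfolding e
      by (intro dvd_minus_iff[THEN iffD2], rule dvd_diff[OF dvd_diff[OF dvd_diff]])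
        (use dij(2) djk(2) dik(2) X in \<open>simp_all add: A_def B_def C_def\<close>)
  qed
  hence qs: "int q dvd s" using coprime_dvd_mult_right_iff[OF cop[THEN coprime_commute[THEN iffD1]]] by simp
  assume "P i j \<inter> Q j k \<noteq> {}"
  then obtain x where xP: "x \<in> P i j" and xQ: "x \<in> Q j k" by blast
  note Hij' = Hij[unfolded is_PQR_partition_def, folded n_def, folded Lij_def]
  note Hjk' = Hjk[unfolded is_PQR_partition_def, folded n_def, folded Ljk_def]
  note Hik' = Hik[unfolded is_PQR_partition_def, folded n_def, folded Lik_def]
  have rij1: "0 \<le> r i j" using Hij' by (elim conjE) assumption
  have rij2: "r i j < int n" using Hij' by (elim conjE) assumption
  have rjk1: "0 \<le> r j k" using Hjk' by (elim conjE) assumption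
  have rjk2: "r j k < int n" using Hjk' by (elim conjE) assumption
  note rij = rij1 rij2 and rjk = rjk1 rjk2
  have LPij: "Lij ` P i j = coset_mod n q (r i j) - {r i j}" using Hij' by (elim conjE) assumption
  have "Lij x \<in> coset_mod n q (r i j) - {r i j}" using xP LPij by blast
  hence a1: "0 \<le> Lij x" "Lij x < int n" "int q dvd Lij x - r i j" "Lij x \<noteq> r i j"
    unfolding coset_mod_def by (auto simp: mod_eq_dvd_iff)
  have np: "\<not> int p dvd Lij x - r i j"
    by (rule not_both[OF pp pq ne]) (use a1 rij n_def in auto)
  have LQjk: "Ljk ` Q j k = coset_mod n p (r j k) - {r j k}" using Hjk' by (elim conjE) assumption
  have "Ljk x \<in> coset_mod n p (r j k) - {r j k}" using xQ LQjk by blast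
  hence a2: "0 \<le> Ljk x" "Ljk x < int n" "int p dvd Ljk x - r j k" "Ljk x \<noteq> r j k"
    unfolding coset_mod_def by (auto simp: mod_eq_dvd_iff)
  have nq: "\<not> int q dvd Ljk x - r j k"
    by (rule not_both[OF pq pp ne[symmetric]]) (use a2 rjk n_def in \<open>auto simp: mult.commute\<close>)
  have Uij: "P i j \<union> Q i j \<union> R i j = {0..<p+q}" using Hij' by (elim conjE) assumption
  have Uik: "P i k \<union> Q i k \<union> R i k = {0..<p+q}" using Hik' by (elim conjE) assumption
  have LPik: "Lik ` P i k = coset_mod n q (r i k) - {r i k}" using Hik' by (elim conjE) assumption
  have LQik: "Lik ` Q i k = coset_mod n p (r i k) - {r i k}" using Hik' by (elim conjE) assumption
  have LRik: "\<forall>k'\<in>R i k. Lik k' = r i k" using Hik' by (elim conjE) assumption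
  have "x \<in> {0..<p+q}" using xP Uij by blast
  hence "x \<in> P i k \<or> x \<in> Q i k \<or> x \<in> R i k" using Uik by blast
  hence "int p dvd Lik x - r i k \<or> int q dvd Lik x - r i k"
  proof (elim disjE)
    assume "x \<in> P i k"
    hence "Lik x \<in> coset_mod n q (r i k)" using LPik by blast
    thus ?thesis unfolding coset_mod_def by (auto simp: mod_eq_dvd_iff)
  next
    assume "x \<in> Q i k"
    hence "Lik x \<in> coset_mod n p (r i k)" using LQik by blast
    thus ?thesis unfolding coset_mod_def by (auto simp: mod_eq_dvd_iff)
  next
    assume "x \<in> R i k"
    hence "Lik x = r i k" using LRik by blast
    thus ?thesis by simp
  qed
  moreover have eq: "Lik x - r i k = (Lij x - r i j) + (Ljk x - r j k) + (Lik x - Lij x - Ljk x) - s"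
    unfolding s_def by simp
  ultimately show False
  proof (elim disjE)
    assume h: "int p dvd Lik x - r i k"
    have e2: "Lij x - r i j = (Lik x - r i k) - (Ljk x - r j k) - (Lik x - Lij x - Ljk x) + s"
      using eq by simp
    have X: "int p dvd Lik x - Lij x - Ljk x" using pw pn dvd_trans by blast
    have "int p dvd Lij x - r i j" unfolding e2
      by (rule dvd_add[OF dvd_diff[OF dvd_diff[OF h a2(3)] X] ps])
    thus False using np by simp
  next
    assume h: "int q dvd Lik x - r i k"
    have e2: "Ljk x - r j k = (Lik x - r i k) - (Lij x - r i j) - (Lik x - Lij x - Ljk x) + s"
      using eq by simp
    have X: "int q dvd Lik x - Lij x - Ljk x" using pw qn dvd_trans by blast
    have "int q dvd Ljk x - r j k" unfolding e2
      by (rule dvd_add[OF dvd_diff[OF dvd_diff[OF h a1(3)] X] qs])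
    thus False using nq by simp
  qed
qed

end
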